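(* Let $a\in C[0,1]$ satisfy: the open sets $\Omega_-:=a^{-1}((-\infty,0))$ and $\Omega_+:=a^{-1}((0,\infty))$ consist of finitely many nontrivial open intervals, $\Omega_-=\bigcup_{j=1}^r(\alpha_j,\beta_j)$ and $\Omega_+=\bigcup_{i=1}^s(\gamma_i,\varrho_i)$, $a$ vanishes at the endpoints of these intervals, and they are adjacent and interlacing (each interior interval is surrounded by two intervals of the opposite sign). For $j\in\{1,\dots,r\}$ and $\lambda\in\mathbb R$, let $\ell^{\min}_{\lambda,j}$ denote the minimal positive solution of $-u''=\lambda u+a(x)u^2$ in $(\alpha_j,\beta_j)$ subject to: $u(\alpha_j)=u(\beta_j)=\infty$ if $0<\alpha_j<\beta_j<1$; $u(0)=0$, $u(\beta_j)=\infty$ if $0=\alpha_j<\beta_j<1$; $u(\alpha_j)=\infty$, $u(1)=0$ if $0<\alpha_j<\beta_j=1$. Then for every $j\in\{1,\dots,r\}$ and every $x\in(\alpha_j,\beta_j)$, $$\lim_{\lambda\downarrow-\infty}\ell^{\min}_{\lambda,j}(x)=0,$$ uniformly on compact subsets of $(\alpha_j,\beta_j)$.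
   Context: A boundary condition $u=\infty$ at an endpoint $c$ means $u(x)\to+\infty$ as $x\to c$ from inside the interval (large/blow-up solutions). The minimal positive solution is the pointwise smallest positive solution of the corresponding singular boundary value problem; its existence is known. *)

theory Defs
  imports "HOL-Analysis.Analysis"
begin

definition pos_sol :: "(real \<Rightarrow> real) \<Rightarrow> real \<Rightarrow> real \<Rightarrow> real \<Rightarrow> (real \<Rightarrow> real) \<Rightarrow> bool" where
  "pos_sol a lam alpha beta u \<longleftrightarrow>
     (\<exists>u'. \<forall>t\<in>{alpha<..<beta}.
        (u has_real_derivative u' t) (at t) \<and>
        (u' has_real_derivative (- (lam * u t + a t * (u t)\<^sup>2))) (at t)) \<and>
     (\<forall>t\<in>{alpha<..<beta}. u t > 0) \<and>
     (if alpha = 0 then (u \<longlongrightarrow> 0) (at_right alpha)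
      else filterlim u at_top (at_right alpha)) \<and>
     (if beta = 1 then (u \<longlongrightarrow> 0) (at_left beta)
      else filterlim u at_top (at_left beta))"

definition min_pos_sol :: "(real \<Rightarrow> real) \<Rightarrow> real \<Rightarrow> real \<Rightarrow> real \<Rightarrow> (real \<Rightarrow> real) \<Rightarrow> bool" where
  "min_pos_sol a lam alpha beta u \<longleftrightarrow>
     pos_sol a lam alpha beta u \<and>
     (\<forall>v. pos_sol a lam alpha beta v \<longrightarrow> (\<forall>t\<in>{alpha<..<beta}. u t \<le> v t))"

end

theory Submission
  imports Defs "HOL-Real_Asymp.Real_Asymp"
begin

lemma maxprin:
  fixes d d' dd :: "real \<Rightarrow> real"
  assumes lh: "l < h"
    and der1: "\<And>s. s \<in> {l..h} \<Longrightarrow> (d has_real_derivative d' s) (at s)"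
    and der2: "\<And>s. s \<in> {l<..<h} \<Longrightarrow> (d' has_real_derivative dd s) (at s)"
    and pos: "\<And>s. s \<in> {l<..<h} \<Longrightarrow> d s > 0 \<Longrightarrow> dd s > 0"
    and dl: "d l \<le> 0" and dh: "d h \<le> 0"
    and s: "s \<in> {l..h}"
  shows "d s \<le> 0"
proof (rule ccontr)
  assume "\<not> d s \<le> 0"
  hence ds: "d s > 0" by simp
  have cont: "continuous_on {l..h} d"
    using der1 by (meson DERIV_continuous continuous_at_imp_continuous_on)
  obtain s0 where s0: "s0 \<in> {l..h}" and mx: "\<And>y. y \<in> {l..h} \<Longrightarrow> d y \<le> d s0"
    using continuous_attains_sup[OF compact_Icc _ cont] lh by fastforce
  have ds0: "d s0 > 0" using mx[OF s] ds by simp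
  have s0i: "s0 \<in> {l<..<h}" using s0 ds0 dl dh by (cases "s0 = l"; cases "s0 = h") auto
  have "d' s0 = 0"
  proof (rule DERIV_local_max[OF der1[OF s0]])
    show "0 < min (s0 - l) (h - s0)" using s0i by simp
    show "\<forall>y. \<bar>s0 - y\<bar> < min (s0 - l) (h - s0) \<longrightarrow> d y \<le> d s0"
      by (intro allI impI mx) auto
  qed
  obtain e where e: "e > 0" and inc: "\<And>k. k > 0 \<Longrightarrow> k < e \<Longrightarrow> d' s0 < d' (s0 + k)"
    using DERIV_pos_inc_right[OF der2[OF s0i] pos[OF s0i ds0]] by blast
  define k where "k = min e (h - s0) / 2"
  have k: "k > 0" "k < e" "s0 + k < h" using e s0i by (auto simp: k_def min_def field_simps)
  obtain z where z: "z > s0" "z < s0 + k" "d (s0 + k) - d s0 = (s0 + k - s0) * d' z"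
    using MVT2[of s0 "s0 + k" d d'] k s0 der1 by auto
  have "d' z > 0" using inc[of "z - s0"] z k \<open>d' s0 = 0\<close> by auto
  hence "k * d' z > 0" using k(1) by simp
  hence "d (s0 + k) > d s0" using z(3) by simp
  moreover have "d (s0 + k) \<le> d s0" using mx[of "s0+k"] k s0 by auto
  ultimately show False by simp
qed

lemma d0_2:
  fixes k y :: real assumes "y \<noteq> 0"
  shows "((\<lambda>s. k / s^2) has_real_derivative (- 2 * k / y^3)) (at y)"
  using assms by (auto intro!: derivative_eq_intros simp: field_simps power2_eq_square power3_eq_cube)
lemma d0_3:
  fixes k y :: real assumes "y \<noteq> 0"
  shows "((\<lambda>s. k / s^3) has_real_derivative (- 3 * k / y^4)) (at y)"
  using assms by (auto intro!: derivative_eq_intros simp: field_simps power4_eq_xxxx power3_eq_cube)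
lemma dA2:
  fixes A k x :: real assumes "x \<noteq> A"
  shows "((\<lambda>s. k / (s - A)^2) has_real_derivative (- 2 * k / (x - A)^3)) (at x)"
proof -
  have "((\<lambda>s. k / s^2) has_real_derivative (- 2 * k / (x - A)^3)) (at ((\<lambda>s. (s - A)) x))"
    using d0_2[of "(x - A)" k] assms by simp
  moreover have "((\<lambda>s. (s - A)) has_real_derivative 1) (at x)" by (auto intro!: derivative_eq_intros)
  ultimately have "((\<lambda>s. (\<lambda>s. k / s^2) ((\<lambda>s. (s - A)) s)) has_real_derivative (- 2 * k / (x - A)^3) * 1) (at x)"
    by (rule DERIV_chain2)
  thus ?thesis by simp
qed
lemma dA3:
  fixes A k x :: real assumes "x \<noteq> A"
  shows "((\<lambda>s. k / (s - A)^3) has_real_derivative (- 3 * k / (x - A)^4)) (at x)"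
proof -
  have "((\<lambda>s. k / s^3) has_real_derivative (- 3 * k / (x - A)^4)) (at ((\<lambda>s. (s - A)) x))"
    using d0_3[of "(x - A)" k] assms by simp
  moreover have "((\<lambda>s. (s - A)) has_real_derivative 1) (at x)" by (auto intro!: derivative_eq_intros)
  ultimately have "((\<lambda>s. (\<lambda>s. k / s^3) ((\<lambda>s. (s - A)) s)) has_real_derivative (- 3 * k / (x - A)^4) * 1) (at x)"
    by (rule DERIV_chain2)
  thus ?thesis by simp
qed
lemma dZ2:
  fixes Z k x :: real assumes "x \<noteq> Z"
  shows "((\<lambda>s. k / (Z - s)^2) has_real_derivative (2 * k / (Z - x)^3)) (at x)"
proof -
  have "((\<lambda>s. k / s^2) has_real_derivative (- 2 * k / (Z - x)^3)) (at ((\<lambda>s. (Z - s)) x))"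
    using d0_2[of "(Z - x)" k] assms by simp
  moreover have "((\<lambda>s. (Z - s)) has_real_derivative (-1)) (at x)" by (auto intro!: derivative_eq_intros)
  ultimately have "((\<lambda>s. (\<lambda>s. k / s^2) ((\<lambda>s. (Z - s)) s)) has_real_derivative (- 2 * k / (Z - x)^3) * (-1)) (at x)"
    by (rule DERIV_chain2)
  thus ?thesis by simp
qed
lemma dZ3:
  fixes Z k x :: real assumes "x \<noteq> Z"
  shows "((\<lambda>s. k / (Z - s)^3) has_real_derivative (3 * k / (Z - x)^4)) (at x)"
proof -
  have "((\<lambda>s. k / s^3) has_real_derivative (- 3 * k / (Z - x)^4)) (at ((\<lambda>s. (Z - s)) x))"
    using d0_3[of "(Z - x)" k] assms by simp
  moreover have "((\<lambda>s. (Z - s)) has_real_derivative (-1)) (at x)" by (auto intro!: derivative_eq_intros)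
  ultimately have "((\<lambda>s. (\<lambda>s. k / s^3) ((\<lambda>s. (Z - s)) s)) has_real_derivative (- 3 * k / (Z - x)^4) * (-1)) (at x)"
    by (rule DERIV_chain2)
  thus ?thesis by simp
qed

lemma ko_bound:
  fixes u u' uu :: "real \<Rightarrow> real"
  assumes r: "r > 0" and c: "c > 0"
    and der1: "\<And>s. s \<in> {P-r..P+r} \<Longrightarrow> (u has_real_derivative u' s) (at s)"
    and der2: "\<And>s. s \<in> {P-r..P+r} \<Longrightarrow> (u' has_real_derivative uu s) (at s)"
    and pos: "\<And>s. s \<in> {P-r..P+r} \<Longrightarrow> u s > 0"
    and ineq: "\<And>s. s \<in> {P-r..P+r} \<Longrightarrow> uu s \<ge> c * (u s)^2"
  shows "u P \<le> 12 / (c * r^2)"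
proof -
  have cont: "continuous_on {P-r..P+r} u"
    using der1 by (meson DERIV_continuous continuous_at_imp_continuous_on)
  obtain sb where sb: "sb \<in> {P-r..P+r}" and bd: "\<And>y. y \<in> {P-r..P+r} \<Longrightarrow> u y \<le> u sb"
    using continuous_attains_sup[OF compact_Icc _ cont] r by fastforce
  define B where "B = u sb"
  have B0: "B > 0" using pos[OF sb] B_def by simp
  define A where "A = P - r"
  define Z where "Z = P + r"
  define \<eta> where "\<eta> = min (r/2) (min 1 (6 / (c * (B+1))))"
  have eta: "\<eta> > 0" "\<eta> < r" "\<eta> \<le> 1" "\<eta> \<le> 6 / (c * (B+1))"
    using r c B0 by (auto simp: \<eta>_def)
  have "\<eta>^2 \<le> \<eta>" using eta by (simp add: power2_eq_square mult_le_cancel_left1)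
  hence "\<eta>^2 \<le> 6 / (c * (B+1))" using eta by linarith
  moreover have "c * (B+1) > 0" using c B0 by simp
  ultimately have "\<eta>^2 * (c * (B+1)) \<le> 6" using pos_le_divide_eq by blast
  hence big: "6 / (c * \<eta>^2) \<ge> B + 1" using c eta by (simp add: field_simps)
  define k0 where "k0 = 6 / c"
  have ck0: "c * k0 = 6" "k0 > 0" using c by (auto simp: k0_def)
  define w where "w s = k0 / (s - A)^2 + k0 / (Z - s)^2" for s
  define w' where "w' s = - 2 * k0 / (s - A)^3 + 2 * k0 / (Z - s)^3" for s
  define w2 where "w2 s = 6 * k0 / (s - A)^4 + 6 * k0 / (Z - s)^4" for s
  have dw: "(w has_real_derivative w' s) (at s)" if "s \<in> {A<..<Z}" for s
  proof -
    have "s \<noteq> A" "s \<noteq> Z" using that by auto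
    from DERIV_add[OF dA2[OF this(1), of k0] dZ2[OF this(2), of k0]]
    show ?thesis unfolding w_def w'_def by simp
  qed
  have dw2: "(w' has_real_derivative w2 s) (at s)" if "s \<in> {A<..<Z}" for s
  proof -
    have "s \<noteq> A" "s \<noteq> Z" using that by auto
    from DERIV_add[OF dA3[OF this(1), of "- 2 * k0"] dZ3[OF this(2), of "2 * k0"]]
    show ?thesis unfolding w2_def w'_def by simp
  qed
  have wsup: "w2 s \<le> c * (w s)^2" "w s \<ge> 0" if "s \<in> {A<..<Z}" for s
  proof -
    have p1: "k0 / (s - A)^2 \<ge> 0" "k0 / (Z - s)^2 \<ge> 0" using ck0 by auto
    have "c * (k0 / (s - A)^2)^2 = (c * k0) * k0 / (s - A)^4"
      by (simp add: power_divide power2_eq_square power4_eq_xxxx mult.assoc)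
    hence "c * (k0 / (s - A)^2)^2 = 6 * k0 / (s - A)^4" using ck0 by simp
    moreover have "c * (k0 / (Z - s)^2)^2 = (c * k0) * k0 / (Z - s)^4"
      by (simp add: power_divide power2_eq_square power4_eq_xxxx mult.assoc)
    hence "c * (k0 / (Z - s)^2)^2 = 6 * k0 / (Z - s)^4" using ck0 by simp
    moreover have "c * (w s)^2 = c * (k0 / (s - A)^2)^2 + c * (k0 / (Z - s)^2)^2
        + 2 * c * ((k0 / (s - A)^2) * (k0 / (Z - s)^2))"
      unfolding w_def by (simp add: power2_eq_square algebra_simps)
    moreover have "2 * c * ((k0 / (s - A)^2) * (k0 / (Z - s)^2)) \<ge> 0"
      using p1 c by simp
    ultimately show "w2 s \<le> c * (w s)^2" unfolding w2_def by linarith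
    show "w s \<ge> 0" using p1 unfolding w_def by simp
  qed
  have wend1: "w (A + \<eta>) \<ge> B + 1"
  proof -
    have "w (A + \<eta>) \<ge> k0 / \<eta>^2" unfolding w_def using ck0 by simp
    moreover have "k0 / \<eta>^2 = 6 / (c * \<eta>^2)" by (simp add: k0_def)
    ultimately show ?thesis using big by linarith
  qed
  have wend2: "w (Z - \<eta>) \<ge> B + 1"
  proof -
    have "w (Z - \<eta>) \<ge> k0 / \<eta>^2" unfolding w_def using ck0 by simp
    moreover have "k0 / \<eta>^2 = 6 / (c * \<eta>^2)" by (simp add: k0_def)
    ultimately show ?thesis using big by linarith
  qed
  have sub: "{A+\<eta>..Z-\<eta>} \<subseteq> {A<..<Z}" using eta by auto
  have sub2: "{A<..<Z} \<subseteq> {P-r..P+r}" by (auto simp: A_def Z_def)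
  have "(\<lambda>s. u s - w s) P \<le> 0"
  proof (rule maxprin[where d = "\<lambda>s. u s - w s" and d' = "\<lambda>s. u' s - w' s" and dd = "\<lambda>s. uu s - w2 s"])
    show "A + \<eta> < Z - \<eta>" using eta by (simp add: A_def Z_def)
    show "((\<lambda>s. u s - w s) has_real_derivative u' s - w' s) (at s)" if "s \<in> {A+\<eta>..Z-\<eta>}" for s
    proof -
      have "s \<in> {A<..<Z}" "s \<in> {P-r..P+r}" using that sub sub2 by blast+
      thus ?thesis by (intro DERIV_diff der1 dw)
    qed
    show "((\<lambda>s. u' s - w' s) has_real_derivative uu s - w2 s) (at s)" if "s \<in> {A+\<eta><..<Z-\<eta>}" for s
    proof -
      have "s \<in> {A<..<Z}" "s \<in> {P-r..P+r}" using that eta by (auto simp: A_def Z_def)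
      thus ?thesis by (intro DERIV_diff der2 dw2)
    qed
    show "uu s - w2 s > 0" if "s \<in> {A+\<eta><..<Z-\<eta>}" "u s - w s > 0" for s
    proof -
      have si: "s \<in> {A<..<Z}" using that eta by auto
      have "w s ^2 < u s ^2" using wsup(2)[OF si] that(2)
        by (simp add: power_strict_mono)
      hence "c * w s ^2 < c * u s ^2" using c by simp
      thus ?thesis using wsup(1)[OF si] ineq[of s] si sub2 by force
    qed
    show "u (A + \<eta>) - w (A + \<eta>) \<le> 0" using bd[of "A+\<eta>"] wend1 eta B_def by (auto simp: A_def Z_def)
    show "u (Z - \<eta>) - w (Z - \<eta>) \<le> 0" using bd[of "Z-\<eta>"] wend2 eta B_def by (auto simp: A_def Z_def)
    show "P \<in> {A+\<eta>..Z-\<eta>}" using eta by (auto simp: A_def Z_def)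
  qed
  moreover have "w P = 12 / (c * r^2)" unfolding w_def A_def Z_def k0_def by simp
  ultimately show ?thesis by simp
qed

lemma lin_bound:
  fixes u u' uu :: "real \<Rightarrow> real"
  assumes PQ: "P < Q" and mu: "\<mu> > 0" and M: "M \<ge> 0"
    and der1: "\<And>s. s \<in> {P..Q} \<Longrightarrow> (u has_real_derivative u' s) (at s)"
    and der2: "\<And>s. s \<in> {P<..<Q} \<Longrightarrow> (u' has_real_derivative uu s) (at s)"
    and ineq: "\<And>s. s \<in> {P<..<Q} \<Longrightarrow> uu s \<ge> \<mu>^2 * u s"
    and uP: "u P \<le> M" and uQ: "u Q \<le> M"
    and s: "s \<in> {P..Q}"
  shows "u s \<le> M * exp (- \<mu> * (s - P)) + M * exp (\<mu> * (s - Q))"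
proof -
  define w where "w s = M * exp (- \<mu> * (s - P)) + M * exp (\<mu> * (s - Q))" for s
  define w' where "w' s = - \<mu> * M * exp (- \<mu> * (s - P)) + \<mu> * M * exp (\<mu> * (s - Q))" for s
  have dw: "(w has_real_derivative w' s) (at s)" for s
    unfolding w_def w'_def by (auto intro!: derivative_eq_intros)
  have dw2: "(w' has_real_derivative \<mu>^2 * w s) (at s)" for s
    unfolding w_def w'_def by (auto intro!: derivative_eq_intros simp: power2_eq_square algebra_simps)
  have "(\<lambda>s. u s - w s) s \<le> 0"
  proof (rule maxprin[where d = "\<lambda>s. u s - w s" and d' = "\<lambda>s. u' s - w' s" and dd = "\<lambda>s. uu s - \<mu>^2 * w s"])
    show "P < Q" by fact
    show "((\<lambda>s. u s - w s) has_real_derivative u' s - w' s) (at s)" if "s \<in> {P..Q}" for s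
      using that by (intro DERIV_diff der1 dw)
    show "((\<lambda>s. u' s - w' s) has_real_derivative uu s - \<mu>^2 * w s) (at s)" if "s \<in> {P<..<Q}" for s
      using that by (intro DERIV_diff der2 dw2)
    show "uu s - \<mu>^2 * w s > 0" if "s \<in> {P<..<Q}" "u s - w s > 0" for s
    proof -
      have "\<mu>^2 * (u s - w s) > 0" using mu that(2) by simp
      thus ?thesis using ineq[OF that(1)] by (simp add: algebra_simps)
    qed
    show "u P - w P \<le> 0" using uP M unfolding w_def by (simp add: add_increasing2)
    show "u Q - w Q \<le> 0" using uQ M unfolding w_def by (simp add: add_increasing)
    show "s \<in> {P..Q}" by fact
  qed
  thus ?thesis unfolding w_def by simp
qed


lemma core:
  fixes a :: "real \<Rightarrow> real" and ell :: "real \<Rightarrow> real \<Rightarrow> real"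
  assumes cont: "continuous_on {\<alpha>..\<beta>} a"
    and neg: "\<And>t. t \<in> {\<alpha><..<\<beta>} \<Longrightarrow> a t < 0"
    and sol: "\<forall>\<^sub>F lam in at_bot. pos_sol a lam \<alpha> \<beta> (ell lam)"
    and K: "compact K" "K \<subseteq> {\<alpha><..<\<beta>}"
  shows "uniform_limit K ell (\<lambda>t. 0) at_bot"
proof (cases "K = {}")
  case True
  then show ?thesis by (simp add: uniform_limit_iff)
next
  case False
  obtain p where p: "p \<in> K" "\<And>t. t \<in> K \<Longrightarrow> p \<le> t"
    using compact_attains_inf[OF K(1) False] by blast
  obtain q where q: "q \<in> K" "\<And>t. t \<in> K \<Longrightarrow> t \<le> q"
    using compact_attains_sup[OF K(1) False] by blast
  have pq: "\<alpha> < p" "p \<le> q" "q < \<beta>" using p q K(2) by auto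
  define \<delta> where "\<delta> = min (p - \<alpha>) (\<beta> - q) / 2"
  have d: "\<delta> > 0" "\<alpha> < p - \<delta>" "q + \<delta> < \<beta>" using pq by (auto simp: \<delta>_def min_def field_simps)
  define r where "r = \<delta> / 2"
  have r: "r > 0" using d by (simp add: r_def)
  have Isub: "{p - \<delta>..q + \<delta>} \<subseteq> {\<alpha><..<\<beta>}" using d by auto
  have contI: "continuous_on {p - \<delta>..q + \<delta>} (\<lambda>t. - a t)"
  proof -
    have "{p - \<delta>..q + \<delta>} \<subseteq> {\<alpha>..\<beta>}" using Isub by fastforce
    hence "continuous_on {p - \<delta>..q + \<delta>} a" using continuous_on_subset[OF cont] by blast
    thus ?thesis by (intro continuous_intros)
  qed
  obtain tc where tc: "tc \<in> {p - \<delta>..q + \<delta>}" and tcmin: "\<And>y. y \<in> {p - \<delta>..q + \<delta>} \<Longrightarrow> - a tc \<le> - a y"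
    using continuous_attains_inf[OF compact_Icc _ contI] pq d by fastforce
  define c where "c = - a tc"
  have c: "c > 0" using neg[of tc] tc Isub by (auto simp: c_def)
  have ca: "\<And>y. y \<in> {p - \<delta>..q + \<delta>} \<Longrightarrow> c \<le> - a y" using tcmin c_def by simp
  define M where "M = 12 / (c * r^2)"
  have M: "M > 0" using c r by (simp add: M_def)
  have bound: "\<forall>\<^sub>F lam in at_bot. \<forall>t\<in>K. 0 < ell lam t \<and> ell lam t \<le> 2 * M * exp (- sqrt (- lam) * r)"
  proof -
    have "\<forall>\<^sub>F lam in at_bot. lam < (0::real)" by (rule eventually_gt_at_bot)
    with sol show ?thesis
    proof eventually_elim
      case (elim lam)
      define u where "u = ell lam"
      have lam: "lam < 0" using elim by simp
      obtain u' where der: "\<And>t. t \<in> {\<alpha><..<\<beta>} \<Longrightarrow> (u has_real_derivative u' t) (at t) \<and>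
          (u' has_real_derivative (- (lam * u t + a t * (u t)\<^sup>2))) (at t)"
        and upos: "\<And>t. t \<in> {\<alpha><..<\<beta>} \<Longrightarrow> u t > 0"
        using elim unfolding pos_sol_def u_def by blast
      define u2 where "u2 t = - (lam * u t + a t * (u t)\<^sup>2)" for t
      define \<mu> where "\<mu> = sqrt (- lam)"
      have mu: "\<mu> > 0" "\<mu>^2 = - lam" using lam by (auto simp: \<mu>_def)
      have inI: "t \<in> {\<alpha><..<\<beta>}" if "t \<in> {p - \<delta>..q + \<delta>}" for t using that Isub by blast
      have d1: "(u has_real_derivative u' t) (at t)" if "t \<in> {p - \<delta>..q + \<delta>}" for t
        using der[OF inI[OF that]] by blast
      have d2: "(u' has_real_derivative u2 t) (at t)" if "t \<in> {p - \<delta>..q + \<delta>}" for t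
        using der[OF inI[OF that]] unfolding u2_def by blast
      have pI: "u t > 0" if "t \<in> {p - \<delta>..q + \<delta>}" for t using upos[OF inI[OF that]] .
      have ineqc: "u2 t \<ge> c * (u t)^2" if "t \<in> {p - \<delta>..q + \<delta>}" for t
      proof -
        have "- lam * u t \<ge> 0" using lam pI[OF that] by (simp add: mult_nonpos_nonneg)
        moreover have "- a t * (u t)^2 \<ge> c * (u t)^2"
          using mult_right_mono[OF ca[OF that], of "(u t)^2"] by simp
        ultimately show ?thesis unfolding u2_def by (simp add: algebra_simps)
      qed
      have ineqm: "u2 t \<ge> \<mu>^2 * u t" if "t \<in> {p - \<delta>..q + \<delta>}" for t
      proof -
        have "- a t * (u t)^2 \<ge> 0" using neg[OF inI[OF that]] by (simp add: mult_nonpos_nonneg)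
        thus ?thesis unfolding u2_def mu(2) by (simp add: algebra_simps)
      qed
      have sub1: "{(p - r) - r..(p - r) + r} \<subseteq> {p - \<delta>..q + \<delta>}" using pq r by (auto simp: r_def)
      have sub2: "{(q + r) - r..(q + r) + r} \<subseteq> {p - \<delta>..q + \<delta>}" using pq r by (auto simp: r_def)
      have sub3: "{p - r..q + r} \<subseteq> {p - \<delta>..q + \<delta>}" using pq r by (auto simp: r_def)
      have uP: "u (p - r) \<le> M" unfolding M_def
        by (rule ko_bound[OF r c, where u' = u' and uu = u2]) (use sub1 d1 d2 pI ineqc in blast)+
      have uQ: "u (q + r) \<le> M" unfolding M_def
        by (rule ko_bound[OF r c, where u' = u' and uu = u2]) (use sub2 d1 d2 pI ineqc in blast)+
      show ?case
      proof
        fix t assume t: "t \<in> K"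
        have tI: "t \<in> {p - r..q + r}" using p(2)[OF t] q(2)[OF t] r by auto
        have "u t \<le> M * exp (- \<mu> * (t - (p - r))) + M * exp (\<mu> * (t - (q + r)))"
        proof (rule lin_bound[OF _ mu(1) less_imp_le[OF M], where u' = u' and uu = u2])
          show "p - r < q + r" using pq r by simp
          show "(u has_real_derivative u' s) (at s)" if "s \<in> {p - r..q + r}" for s
            using that sub3 d1 by blast
          show "(u' has_real_derivative u2 s) (at s)" if "s \<in> {p - r<..<q + r}" for s
            using that sub3 d2 by auto
          show "u2 s \<ge> \<mu>^2 * u s" if "s \<in> {p - r<..<q + r}" for s
            using that sub3 ineqm by auto
        qed (use uP uQ tI in auto)
        also have "\<dots> \<le> M * exp (- \<mu> * r) + M * exp (- \<mu> * r)"
        proof (rule add_mono)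
          have "- \<mu> * (t - (p - r)) \<le> - \<mu> * r" using p(2)[OF t] mu(1) by (simp add: mult_left_mono)
          thus "M * exp (- \<mu> * (t - (p - r))) \<le> M * exp (- \<mu> * r)" using M by simp
          have "\<mu> * (t - (q + r)) \<le> - \<mu> * r" using q(2)[OF t] mu(1)
            by (simp add: mult_left_mono algebra_simps)
          thus "M * exp (\<mu> * (t - (q + r))) \<le> M * exp (- \<mu> * r)" using M by simp
        qed
        finally have "u t \<le> 2 * M * exp (- \<mu> * r)" by simp
        moreover have "u t > 0" using upos t K(2) by blast
        ultimately show "0 < ell lam t \<and> ell lam t \<le> 2 * M * exp (- sqrt (- lam) * r)"
          unfolding u_def \<mu>_def by simp
      qed
    qed
  qed
  have lim: "((\<lambda>l::real. 2 * M * exp (- sqrt (- l) * r)) \<longlongrightarrow> 0) at_bot"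
    using r by real_asymp
  show ?thesis unfolding uniform_limit_iff
  proof (intro allI impI)
    fix e :: real assume e: "e > 0"
    have "\<forall>\<^sub>F l in at_bot. 2 * M * exp (- sqrt (- l) * r) < e"
      using order_tendstoD(2)[OF lim e] .
    with bound show "\<forall>\<^sub>F l in at_bot. \<forall>t\<in>K. dist (ell l t) 0 < e"
      by eventually_elim (auto simp: dist_real_def)
  qed
qed

theorem corollary3p1:
  fixes a :: "real \<Rightarrow> real" and x :: "nat \<Rightarrow> real" and n :: nat and \<sigma> :: real
    and k :: nat and ell :: "real \<Rightarrow> real \<Rightarrow> real"
  assumes cont: "continuous_on {0..1} a"
    and n2: "n \<ge> 2"
    and x0: "x 0 = 0" and xn: "x n = 1"
    and xmono: "\<And>i. i < n \<Longrightarrow> x i < x (Suc i)"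
    and vanish: "\<And>i. i \<le> n \<Longrightarrow> a (x i) = 0"
    and sigma: "\<sigma> = 1 \<or> \<sigma> = -1"
    and alternate: "\<And>i t. i < n \<Longrightarrow> t \<in> {x i<..<x (Suc i)} \<Longrightarrow> sgn (a t) = \<sigma> * (-1) ^ i"
    and k: "k < n" and neg: "\<And>t. t \<in> {x k<..<x (Suc k)} \<Longrightarrow> a t < 0"
    and minsol: "\<forall>\<^sub>F lam in at_bot. min_pos_sol a lam (x k) (x (Suc k)) (ell lam)"
  shows "(\<forall>t\<in>{x k<..<x (Suc k)}. ((\<lambda>lam. ell lam t) \<longlongrightarrow> 0) at_bot) \<and>
         (\<forall>K. compact K \<and> K \<subseteq> {x k<..<x (Suc k)} \<longrightarrow> uniform_limit K ell (\<lambda>t. 0) at_bot)"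
proof -
  have x0le: "i \<le> n \<Longrightarrow> 0 \<le> x i" for i
  proof (induction i)
    case 0 then show ?case using x0 by simp
  next
    case (Suc i) then show ?case using xmono[of i] by simp
  qed
  have xle1: "j \<le> n \<Longrightarrow> x (n - j) \<le> 1" for j
  proof (induction j)
    case 0 then show ?case using xn by simp
  next
    case (Suc j)
    have "Suc (n - Suc j) = n - j" using Suc.prems by simp
    then show ?case using xmono[of "n - Suc j"] Suc by auto
  qed
  have a0: "0 \<le> x k" using x0le k by simp
  have b1: "x (Suc k) \<le> 1" using xle1[of "n - Suc k"] k by simp
  have cont': "continuous_on {x k..x (Suc k)} a"
    using continuous_on_subset[OF cont] a0 b1 by auto
  have sol: "\<forall>\<^sub>F lam in at_bot. pos_sol a lam (x k) (x (Suc k)) (ell lam)"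
    using minsol by (rule eventually_mono) (simp add: min_pos_sol_def)
  have U: "\<forall>K. compact K \<and> K \<subseteq> {x k<..<x (Suc k)} \<longrightarrow> uniform_limit K ell (\<lambda>t. 0) at_bot"
    using core[OF cont' neg sol] by blast
  have P: "\<forall>t\<in>{x k<..<x (Suc k)}. ((\<lambda>lam. ell lam t) \<longlongrightarrow> 0) at_bot"
  proof
    fix t assume t: "t \<in> {x k<..<x (Suc k)}"
    have "uniform_limit {t} ell (\<lambda>t. 0) at_bot" using U[rule_format, of "{t}"] t by simp
    thus "((\<lambda>lam. ell lam t) \<longlongrightarrow> 0) at_bot"
      unfolding uniform_limit_iff tendsto_iff by simp
  qed
  show ?thesis using P U by blast
qed

end
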